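(* Let $n\ge 2$ and let $f\colon[0,\infty)\to[0,\infty)$ be moderately increasing and convex. Put $M(x,y)=f(x)f(y)$ and $\rho_M(x,y)=\dfrac{|x-y|}{f(|x|)f(|y|)}$ for $x,y\in\mathbb{R}^n$. Then $\rho_M$ is $c$--quasiconvex in $\mathbb{R}^n$ for some $c\le\sqrt{\pi^2/4+4}$.
   Context: Convention $0/0=0$. A function $f\colon[0,\infty)\to[0,\infty)$ is moderately increasing if it is increasing and $f(t)/t$ is decreasing on $(0,\infty)$. For a path $\gamma\colon[0,l]\to\mathbb{R}^n$, $\ell_M(\gamma)=\lim\sum_i\rho_M(\gamma(t_i),\gamma(t_{i+1}))$, the limit over partitions $0=t_0<\dots<t_m=l$ with mesh tending to $0$. $\rho_M$ is $c$--quasiconvex if $\inf_\gamma\ell_M(\gamma)\le c\,\rho_M(x,y)$ for all $x,y$, the infimum over rectifiable paths joining $x$ and $y$. *)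

theory Defs
  imports "HOL-Analysis.Analysis" "HOL-Library.Extended_Real"
begin

definition moderately_increasing :: "(real \<Rightarrow> real) \<Rightarrow> bool" where
  "moderately_increasing f \<longleftrightarrow>
     mono_on {0..} f \<and> antimono_on {0<..} (\<lambda>t. f t / t)"

definition rhoM :: "(real \<Rightarrow> real) \<Rightarrow> 'a::euclidean_space \<Rightarrow> 'a \<Rightarrow> ereal" where
  "rhoM f x y =
     (if f (norm x) * f (norm y) = 0 then (if x = y then 0 else \<infinity>)
      else ereal (dist x y / (f (norm x) * f (norm y))))"

definition is_partition :: "real \<Rightarrow> real list \<Rightarrow> bool" where
  "is_partition l ts \<longleftrightarrow> ts \<noteq> [] \<and> hd ts = 0 \<and> last ts = l \<and> sorted_wrt (<) ts"

definition mesh :: "real list \<Rightarrow> real" where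
  "mesh ts = foldr max (map (\<lambda>(a, b). b - a) (zip ts (tl ts))) 0"

definition psum :: "('a \<Rightarrow> 'a \<Rightarrow> 'b::monoid_add) \<Rightarrow> (real \<Rightarrow> 'a) \<Rightarrow> real list \<Rightarrow> 'b" where
  "psum d \<gamma> ts = sum_list (map (\<lambda>(a, b). d (\<gamma> a) (\<gamma> b)) (zip ts (tl ts)))"

definition partition_filter :: "real \<Rightarrow> real list filter" where
  "partition_filter l = (INF \<delta>\<in>{0<..}. principal {ts. is_partition l ts \<and> mesh ts < \<delta>})"

definition rectifiable_path_on :: "real \<Rightarrow> (real \<Rightarrow> 'a::euclidean_space) \<Rightarrow> bool" where
  "rectifiable_path_on l \<gamma> \<longleftrightarrow> 0 < l \<and> continuous_on {0..l} \<gamma> \<and>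
     bdd_above {psum dist \<gamma> ts | ts. is_partition l ts}"

definition has_M_length ::
  "('a \<Rightarrow> 'a \<Rightarrow> ereal) \<Rightarrow> real \<Rightarrow> (real \<Rightarrow> 'a) \<Rightarrow> ereal \<Rightarrow> bool" where
  "has_M_length \<rho> l \<gamma> L \<longleftrightarrow> ((\<lambda>ts. psum \<rho> \<gamma> ts) \<longlongrightarrow> L) (partition_filter l)"

definition quasiconvex :: "real \<Rightarrow> ('a::euclidean_space \<Rightarrow> 'a \<Rightarrow> ereal) \<Rightarrow> bool" where
  "quasiconvex c \<rho> \<longleftrightarrow> (\<forall>x y.
     (INF L\<in>{L. \<exists>l \<gamma>. rectifiable_path_on l \<gamma> \<and> \<gamma> 0 = x \<and> \<gamma> l = y \<and> has_M_length \<rho> l \<gamma> L}. L)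
       \<le> ereal c * \<rho> x y)"

end

theory Submission
  imports Defs
begin


lemma zip_tl_mem:
  "sorted_wrt (<) ts \<Longrightarrow> (a,b) \<in> set (zip ts (tl ts)) \<Longrightarrow> (a::real) < b \<and> a \<in> set ts \<and> b \<in> set ts"
proof (induction ts)
  case Nil then show ?case by simp
next
  case (Cons x xs)
  show ?case
  proof (cases xs)
    case Nil with Cons show ?thesis by simp
  next
    case (Cons y ys)
    with Cons.prems have "(a,b) = (x,y) \<or> (a,b) \<in> set (zip xs (tl xs))" by auto
    then show ?thesis using Cons.IH Cons.prems \<open>xs = y # ys\<close> by auto
  qed
qed

lemma partition_mem:
  assumes "is_partition l ts" "t \<in> set ts" shows "0 \<le> t \<and> t \<le> l"
proof -
  have s: "sorted ts" using assms(1) unfolding is_partition_def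
    using sorted_wrt_mono_rel[of ts "(<)" "(\<le>)"] by auto
  have ne: "ts \<noteq> []" using assms(1) unfolding is_partition_def by auto
  have sw: "sorted_wrt (<) ts" using assms(1) unfolding is_partition_def by auto
  have "hd ts \<le> t"
  proof -
    obtain x xs where "ts = x # xs" using ne by (cases ts) auto
    then show ?thesis using sw assms(2) by (auto intro: less_imp_le)
  qed
  moreover have "t \<le> last ts"
  proof -
    have e: "ts = butlast ts @ [last ts]" using ne by simp
    have "sorted_wrt (<) (butlast ts @ [last ts])" using sw e by simp
    then have "\<forall>z\<in>set (butlast ts). z < last ts" by (simp add: sorted_wrt_append)
    moreover have "t \<in> set (butlast ts) \<or> t = last ts" using assms(2) e
      by (metis in_set_butlast_appendI last_in_set ne set_ConsD set_append Un_iff empty_set empty_iff)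
    ultimately show ?thesis by auto
  qed
  ultimately show ?thesis using assms(1) unfolding is_partition_def by auto
qed

lemma foldr_max_ge: "x \<in> set xs \<Longrightarrow> x \<le> foldr max xs (0::real)"
  by (induction xs) auto

lemma foldr_max_nonneg: "0 \<le> foldr max xs (0::real)"
  by (induction xs) (auto simp: le_max_iff_disj)

lemma mesh_nonneg: "0 \<le> mesh ts"
  unfolding mesh_def by (rule foldr_max_nonneg)

lemma mesh_ge: "(a,b) \<in> set (zip ts (tl ts)) \<Longrightarrow> b - a \<le> mesh ts"
  unfolding mesh_def by (rule foldr_max_ge) force

lemma tele_aux:
  fixes g :: "real \<Rightarrow> real \<Rightarrow> real"
  assumes "sorted_wrt (<) ts" "ts \<noteq> []" "C \<ge> 0"
    "\<forall>(a,b)\<in>set (zip ts (tl ts)). g a b \<le> H b - H a + (if a < T \<and> T < b then C else 0)"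
  shows "sum_list (map (\<lambda>(a,b). g a b) (zip ts (tl ts))) \<le> H (last ts) - H (hd ts) + (if hd ts < T then C else 0)"
  using assms
proof (induction ts)
  case Nil then show ?case by simp
next
  case (Cons x xs)
  show ?case
  proof (cases xs)
    case Nil with Cons show ?thesis by simp
  next
    case (Cons y ys)
    have IH: "sum_list (map (\<lambda>(a,b). g a b) (zip xs (tl xs))) \<le> H (last xs) - H y + (if y < T then C else 0)"
      using Cons.IH Cons.prems \<open>xs = y # ys\<close> by auto
    have g: "g x y \<le> H y - H x + (if x < T \<and> T < y then C else 0)"
      using Cons.prems \<open>xs = y # ys\<close> by auto
    have xy: "x < y" using Cons.prems \<open>xs = y # ys\<close> by auto
    have "sum_list (map (\<lambda>(a,b). g a b) (zip (x#xs) (tl (x#xs)))) = g x y + sum_list (map (\<lambda>(a,b). g a b) (zip xs (tl xs)))"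
      using \<open>xs = y # ys\<close> by simp
    also have "\<dots> \<le> H (last xs) - H x + (if x < T then C else 0)"
      using IH g xy \<open>C \<ge> 0\<close> by (auto split: if_splits)
    finally show ?thesis using \<open>xs = y # ys\<close> by simp
  qed
qed

lemma tele:
  fixes g :: "real \<Rightarrow> real \<Rightarrow> real"
  assumes "sorted_wrt (<) ts" "ts \<noteq> []" "C \<ge> 0"
    "\<And>a b. (a,b)\<in>set (zip ts (tl ts)) \<Longrightarrow> g a b \<le> H b - H a + (if a < T \<and> T < b then C else 0)"
  shows "sum_list (map (\<lambda>(a,b). g a b) (zip ts (tl ts))) \<le> H (last ts) - H (hd ts) + C"
proof -
  have "sum_list (map (\<lambda>(a,b). g a b) (zip ts (tl ts))) \<le> H (last ts) - H (hd ts) + (if hd ts < T then C else 0)"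
  proof (rule tele_aux[OF assms(1-3)], intro ballI)
    fix p assume p: "p \<in> set (zip ts (tl ts))"
    obtain a b where "p = (a,b)" by (cases p)
    with p assms(4)[of a b] show "case p of (a, b) \<Rightarrow> g a b \<le> H b - H a + (if a < T \<and> T < b then C else 0)"
      by simp
  qed
  then show ?thesis using assms(3) by (simp split: if_splits)
qed

lemma sum_list_ereal: "sum_list (map (\<lambda>p. ereal (g p)) xs) = ereal (sum_list (map g xs))"
  by (induction xs) auto

lemma foldr_max_le: "(\<forall>x\<in>set xs. x \<le> c) \<Longrightarrow> 0 \<le> c \<Longrightarrow> foldr max xs (0::real) \<le> c"
  by (induction xs) auto

lemma exists_partition:
  assumes "0 < l" "0 < \<delta>"
  shows "\<exists>ts. is_partition l ts \<and> mesh ts < \<delta>"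
proof -
  obtain N :: nat where N: "l / \<delta> < real N" using reals_Archimedean2 by blast
  have "0 < l / \<delta>" using assms by simp
  then have Npos: "0 < real N" using N by linarith
  define ts where "ts = map (\<lambda>k. real k * l / real N) [0..<Suc N]"
  have len: "length ts = Suc N" by (simp add: ts_def)
  have nth: "\<And>i. i < Suc N \<Longrightarrow> ts ! i = real i * l / real N" by (simp add: ts_def del: upt_Suc)
  have "ts \<noteq> []" by (simp add: ts_def)
  moreover have "hd ts = 0" using nth[of 0] \<open>ts \<noteq> []\<close> by (simp add: hd_conv_nth)
  moreover have "last ts = l" using nth[of N] \<open>ts \<noteq> []\<close> len Npos by (simp add: last_conv_nth)
  moreover have "sorted_wrt (<) ts"
    unfolding ts_def sorted_wrt_map
    by (rule sorted_wrt_mono_rel[OF _ sorted_wrt_upt]) (use assms Npos in \<open>auto simp: divide_strict_right_mono\<close>)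
  moreover have "mesh ts < \<delta>"
  proof -
    have "mesh ts \<le> l / real N"
      unfolding mesh_def
    proof (rule foldr_max_le)
      show "0 \<le> l / real N" using assms Npos by simp
      show "\<forall>x\<in>set (map (\<lambda>(a, b). b - a) (zip ts (tl ts))). x \<le> l / real N"
      proof
        fix x assume "x \<in> set (map (\<lambda>(a, b). b - a) (zip ts (tl ts)))"
        then obtain i where i: "i < N" "x = tl ts ! i - ts ! i"
          by (auto simp: set_zip len)
        have "tl ts ! i = ts ! Suc i" using i len by (simp add: nth_tl)
        then have "x = real (Suc i) * l / real N - real i * l / real N" using i nth by simp
        also have "\<dots> = (real (Suc i) * l - real i * l) / real N" by (simp only: diff_divide_distrib)
        also have "\<dots> = l / real N" by (simp add: algebra_simps)
        finally show "x \<le> l / real N" by simp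
      qed
    qed
    also have "l / real N < \<delta>" using N assms Npos by (simp add: field_simps)
    finally show ?thesis .
  qed
  ultimately show ?thesis unfolding is_partition_def by blast
qed

lemma ev_pf:
  assumes "0 < \<delta>" "\<And>ts. is_partition l ts \<Longrightarrow> mesh ts < \<delta> \<Longrightarrow> P ts"
  shows "eventually P (partition_filter l)"
  unfolding partition_filter_def
  by (rule eventually_INF1[of \<delta>]) (use assms in \<open>auto simp: eventually_principal\<close>)

lemma has_M_length_real:
  assumes eq: "\<And>ts. is_partition l ts \<Longrightarrow> psum \<rho> \<gamma> ts = ereal (S ts)"
    and conv: "\<And>\<epsilon>. \<epsilon> > 0 \<Longrightarrow> \<exists>\<delta>>0. \<forall>ts. is_partition l ts \<and> mesh ts < \<delta> \<longrightarrow> \<bar>S ts - L\<bar> < \<epsilon>"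
  shows "has_M_length \<rho> l \<gamma> (ereal L)"
proof -
  have "(S \<longlongrightarrow> L) (partition_filter l)"
  proof (rule tendstoI)
    fix e :: real assume "0 < e"
    then obtain \<delta> where "\<delta> > 0" "\<forall>ts. is_partition l ts \<and> mesh ts < \<delta> \<longrightarrow> \<bar>S ts - L\<bar> < e"
      using conv by blast
    then show "eventually (\<lambda>ts. dist (S ts) L < e) (partition_filter l)"
      by (intro ev_pf[of \<delta>]) (auto simp: dist_real_def)
  qed
  then have lim: "((\<lambda>ts. ereal (S ts)) \<longlongrightarrow> ereal L) (partition_filter l)" by (rule tendsto_ereal)
  have ev: "eventually (\<lambda>ts. psum \<rho> \<gamma> ts = ereal (S ts)) (partition_filter l)"
    by (rule ev_pf[of 1]) (use eq in auto)
  show ?thesis unfolding has_M_length_def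
    by (subst tendsto_cong[OF ev]) (rule lim)
qed

lemma pair_props:
  assumes "is_partition l ts" "(a,b) \<in> set (zip ts (tl ts))"
  shows "0 \<le> a" "a < b" "b \<le> l" "b - a \<le> mesh ts"
proof -
  have sw: "sorted_wrt (<) ts" using assms(1) by (simp add: is_partition_def)
  from zip_tl_mem[OF sw assms(2)] have "a < b" "a \<in> set ts" "b \<in> set ts" by auto
  then show "0 \<le> a" "a < b" "b \<le> l" using partition_mem[OF assms(1)] by auto
  show "b - a \<le> mesh ts" using mesh_ge[OF assms(2)] .
qed

lemma rectifiable_lemma:
  fixes \<gamma> :: "real \<Rightarrow> 'a::euclidean_space"
  assumes "0 < l" "continuous_on {0..l} \<gamma>"
    and lip: "\<And>a b. 0 \<le> a \<Longrightarrow> a \<le> b \<Longrightarrow> b \<le> l \<Longrightarrow> norm (\<gamma> b - \<gamma> a) \<le> b - a"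
  shows "rectifiable_path_on l \<gamma>"
proof -
  have "psum dist \<gamma> ts \<le> l" if ts: "is_partition l ts" for ts
  proof -
    have "psum dist \<gamma> ts = sum_list (map (\<lambda>(a,b). dist (\<gamma> a) (\<gamma> b)) (zip ts (tl ts)))"
      by (simp add: psum_def)
    also have "\<dots> \<le> (\<lambda>t. t) (last ts) - (\<lambda>t. t) (hd ts) + 0"
    proof (rule tele[where T=0])
      show "sorted_wrt (<) ts" "ts \<noteq> []" using ts by (auto simp: is_partition_def)
      fix a b assume ab: "(a,b) \<in> set (zip ts (tl ts))"
      note P = pair_props[OF ts ab]
      show "dist (\<gamma> a) (\<gamma> b) \<le> b - a + (if a < 0 \<and> 0 < b then 0 else 0)"
        using lip[of a b] P by (simp add: dist_norm norm_minus_commute)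
    qed simp
    also have "\<dots> = l" using ts by (simp add: is_partition_def)
    finally show ?thesis .
  qed
  then show ?thesis using assms unfolding rectifiable_path_on_def bdd_above_def by blast
qed

lemma path_main:
  fixes \<gamma> :: "real \<Rightarrow> 'a::euclidean_space" and f :: "real \<Rightarrow> real"
  assumes l: "0 < l" "0 \<le> T" "T \<le> l" and kap: "0 \<le> \<kappa>"
    and cont: "continuous_on {0..l} (\<lambda>t. f (norm (\<gamma> t)))"
    and fpos: "\<And>t. t \<in> {0..l} \<Longrightarrow> 0 < f (norm (\<gamma> t))"
    and lip: "\<And>a b. 0 \<le> a \<Longrightarrow> a \<le> b \<Longrightarrow> b \<le> l \<Longrightarrow> norm (\<gamma> b - \<gamma> a) \<le> b - a"
    and dfc: "\<And>a b. 0 \<le> a \<Longrightarrow> a \<le> b \<Longrightarrow> b \<le> l \<Longrightarrow> b \<le> T \<or> T \<le> a \<Longrightarrow>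
                b - a - norm (\<gamma> b - \<gamma> a) \<le> \<kappa> * (b - a)^3"
    and Hb: "\<And>a b. 0 \<le> a \<Longrightarrow> a \<le> b \<Longrightarrow> b \<le> l \<Longrightarrow> b \<le> T \<or> T \<le> a \<Longrightarrow>
                (b - a) / (f (norm (\<gamma> a)) * f (norm (\<gamma> b))) \<le> H b - H a"
    and Hm: "\<And>a b. 0 \<le> a \<Longrightarrow> a \<le> b \<Longrightarrow> b \<le> l \<Longrightarrow> H a \<le> H b"
  shows "\<exists>L. has_M_length (rhoM f) l \<gamma> (ereal L) \<and> L \<le> H l - H 0"
proof -
  define w where "w t = 1 / f (norm (\<gamma> t))" for t
  define v where "v t = w t * w t" for t
  have wpos: "0 < w t" if "t \<in> {0..l}" for t using fpos[OF that] by (simp add: w_def)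
  have wc: "continuous_on {0..l} w"
    unfolding w_def by (intro continuous_intros cont) (use fpos in force)
  have vc: "continuous_on {0..l} v" unfolding v_def by (intro continuous_intros wc)
  have vcs: "continuous_on {a..b} v" if "0 \<le> a" "b \<le> l" for a b
    by (rule continuous_on_subset[OF vc]) (use that in auto)
  have vint: "v integrable_on {a..b}" if "0 \<le> a" "b \<le> l" for a b
    by (rule integrable_continuous_interval[OF vcs[OF that]])
  define G where "G t = integral {0..t} v" for t
  have Gd: "G b - G a = integral {a..b} v" if "0 \<le> a" "a \<le> b" "b \<le> l" for a b
    using Henstock_Kurzweil_Integration.integral_combine[of 0 a b v] vint[of 0 b] that by (simp add: G_def)
  obtain K where K: "0 < K" "\<And>t. t \<in> {0..l} \<Longrightarrow> norm (w t) \<le> K"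
  proof -
    have "compact (w ` {0..l})" by (rule compact_continuous_image[OF wc]) simp
    then have "bounded (w ` {0..l})" by (rule compact_imp_bounded)
    then show ?thesis using that unfolding bounded_pos by auto
  qed
  have wK: "0 \<le> w t \<and> w t \<le> K" if "t \<in> {0..l}" for t using K(2)[OF that] wpos[OF that] by simp
  have uc: "uniformly_continuous_on {0..l} w" by (rule compact_uniformly_continuous[OF wc]) simp
  have step: "\<exists>d>0. \<forall>a b. 0 \<le> a \<longrightarrow> a \<le> b \<longrightarrow> b \<le> l \<longrightarrow> b - a < d \<longrightarrow>
                 \<bar>(b - a) * (w a * w b) - (G b - G a)\<bar> \<le> \<eta> * (b - a)" if "0 < \<eta>" for \<eta>
  proof -
    obtain d where d: "d > 0" "\<And>x x'. x \<in> {0..l} \<Longrightarrow> x' \<in> {0..l} \<Longrightarrow> dist x' x < d \<Longrightarrow> dist (w x') (w x) < \<eta> / (2 * K)"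
      using uc[unfolded uniformly_continuous_on_def, rule_format, of "\<eta> / (2 * K)"] \<open>0 < \<eta>\<close> K(1)
      by (metis divide_pos_pos mult_pos_pos zero_less_numeral)
    show ?thesis
    proof (intro exI[of _ d] conjI allI impI)
      show "0 < d" by (rule d(1))
      fix a b assume ab: "0 \<le> a" "a \<le> b" "b \<le> l" "b - a < d"
      have pt: "\<bar>w a * w b - v t\<bar> \<le> \<eta>" if t: "t \<in> {a..b}" for t
      proof -
        have t0: "t \<in> {0..l}" using t ab by auto
        have a0: "a \<in> {0..l}" and b0: "b \<in> {0..l}" using ab by auto
        have e1: "\<bar>w b - w t\<bar> \<le> \<eta> / (2 * K)"
          using d(2)[OF t0 b0] t ab by (simp add: dist_real_def)
        have e2: "\<bar>w a - w t\<bar> \<le> \<eta> / (2 * K)"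
          using d(2)[OF t0 a0] t ab by (simp add: dist_real_def)
        have "w a * w b - v t = w a * (w b - w t) + w t * (w a - w t)" by (simp add: v_def algebra_simps)
        then have "\<bar>w a * w b - v t\<bar> \<le> \<bar>w a\<bar> * \<bar>w b - w t\<bar> + \<bar>w t\<bar> * \<bar>w a - w t\<bar>"
          by (simp add: abs_mult[symmetric] abs_triangle_ineq)
        also have "\<dots> \<le> K * (\<eta> / (2 * K)) + K * (\<eta> / (2 * K))"
          using wK[OF a0] wK[OF t0] e1 e2
          by (intro add_mono mult_mono) auto
        also have "\<dots> = \<eta>" using K(1) by (simp add: field_simps)
        finally show ?thesis .
      qed
      have "integral {a..b} (\<lambda>t. w a * w b - v t) = (b - a) * (w a * w b) - integral {a..b} v"
      proof -
        have "integral {a..b} (\<lambda>t. w a * w b - v t) = integral {a..b} (\<lambda>t. w a * w b) - integral {a..b} v"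
          by (rule Henstock_Kurzweil_Integration.integral_diff)
             (use ab vint[of a b] in \<open>auto intro: integrable_continuous_interval continuous_on_const\<close>)
        then show ?thesis using ab by simp
      qed
      moreover have "norm (integral {a..b} (\<lambda>t. w a * w b - v t)) \<le> \<eta> * (b - a)"
        by (rule integral_bound) (use ab pt in \<open>auto intro!: continuous_intros vcs\<close>)
      ultimately show "\<bar>(b - a) * (w a * w b) - (G b - G a)\<bar> \<le> \<eta> * (b - a)"
        using Gd[OF ab(1-3)] by simp
    qed
  qed
  define g where "g a b = norm (\<gamma> b - \<gamma> a) * (w a * w b)" for a b
  define S where "S ts = sum_list (map (\<lambda>(a,b). g a b) (zip ts (tl ts)))" for ts
  define I where "I = G l - G 0"
  have eq: "psum (rhoM f) \<gamma> ts = ereal (S ts)" if ts: "is_partition l ts" for ts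
  proof -
    have "map (\<lambda>(a,b). rhoM f (\<gamma> a) (\<gamma> b)) (zip ts (tl ts)) = map (\<lambda>p. ereal ((\<lambda>(a,b). g a b) p)) (zip ts (tl ts))"
    proof (rule map_cong[OF refl])
      fix p assume p: "p \<in> set (zip ts (tl ts))"
      obtain a b where pab: "p = (a,b)" by (cases p)
      note P = pair_props[OF ts p[unfolded pab]]
      have fa: "0 < f (norm (\<gamma> a))" and fb: "0 < f (norm (\<gamma> b))" using fpos P by auto
      show "(\<lambda>(a,b). rhoM f (\<gamma> a) (\<gamma> b)) p = ereal ((\<lambda>(a,b). g a b) p)"
        using fa fb by (simp add: pab rhoM_def g_def w_def dist_norm norm_minus_commute)
    qed
    note meq = this
    show ?thesis unfolding psum_def S_def meq by (rule sum_list_ereal)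
  qed
  have conv: "\<exists>\<delta>>0. \<forall>ts. is_partition l ts \<and> mesh ts < \<delta> \<longrightarrow> \<bar>S ts - I\<bar> < \<epsilon>" if "0 < \<epsilon>" for \<epsilon>
  proof -
    define \<eta> where "\<eta> = \<epsilon> / (3 * l)"
    have \<eta>: "0 < \<eta>" using that l by (simp add: \<eta>_def)
    obtain d where d: "d > 0" "\<And>a b. 0 \<le> a \<Longrightarrow> a \<le> b \<Longrightarrow> b \<le> l \<Longrightarrow> b - a < d \<Longrightarrow>
                 \<bar>(b - a) * (w a * w b) - (G b - G a)\<bar> \<le> \<eta> * (b - a)"
      using step[OF \<eta>] by blast
    define M where "M = K^2 * (\<kappa> * l + 1)"
    have M: "0 < M" using K(1) kap l by (simp add: M_def add_nonneg_pos)
    define \<delta> where "\<delta> = min d (min 1 (\<epsilon> / (3 * M)))"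
    have \<delta>: "0 < \<delta>" "\<delta> \<le> d" "\<delta> \<le> 1" "\<delta> \<le> \<epsilon> / (3 * M)"
      using d(1) M that by (auto simp: \<delta>_def)
    show ?thesis
    proof (intro exI[of _ \<delta>] conjI allI impI)
      show "0 < \<delta>" by (rule \<delta>(1))
      fix ts assume tsm: "is_partition l ts \<and> mesh ts < \<delta>"
      then have ts: "is_partition l ts" and ms: "mesh ts < \<delta>" by auto
      have sw: "sorted_wrt (<) ts" "ts \<noteq> []" "hd ts = 0" "last ts = l" using ts by (auto simp: is_partition_def)
      have PP: "0 \<le> a \<and> a < b \<and> b \<le> l \<and> b - a < \<delta>" if "(a,b) \<in> set (zip ts (tl ts))" for a b
        using pair_props[OF ts that] ms by auto
      have up: "S ts \<le> (\<lambda>t. G t + \<eta> * t) (last ts) - (\<lambda>t. G t + \<eta> * t) (hd ts) + 0"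
        unfolding S_def
      proof (rule tele[where T=0, OF sw(1,2)])
        fix a b assume ab: "(a,b) \<in> set (zip ts (tl ts))"
        note P = PP[OF ab]
        have "g a b \<le> (b - a) * (w a * w b)"
          unfolding g_def using lip[of a b] P wK[of a] wK[of b]
          by (intro mult_right_mono) auto
        also have "\<dots> \<le> G b - G a + \<eta> * (b - a)" using d(2)[of a b] P \<delta> by auto
        finally show "g a b \<le> (G b + \<eta> * b) - (G a + \<eta> * a) + (if a < 0 \<and> 0 < b then 0 else 0)"
          by (simp add: algebra_simps)
      qed simp
      define c where "c = \<eta> + K^2 * \<kappa> * \<delta>^2"
      have lo: "sum_list (map (\<lambda>(a,b). - g a b) (zip ts (tl ts))) \<le>
            (\<lambda>t. - G t + c * t) (last ts) - (\<lambda>t. - G t + c * t) (hd ts) + K^2 * \<delta>"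
      proof (rule tele[OF sw(1,2)])
        show "0 \<le> K^2 * \<delta>" using \<delta> by simp
        fix a b assume ab: "(a,b) \<in> set (zip ts (tl ts))"
        note P = PP[OF ab]
        define D where "D = b - a - norm (\<gamma> b - \<gamma> a)"
        have D0: "0 \<le> D" using lip[of a b] P by (simp add: D_def)
        have ww: "0 \<le> w a * w b" "w a * w b \<le> K^2"
          using wK[of a] wK[of b] P by (auto simp: power2_eq_square intro: mult_mono)
        have "g a b = (b - a) * (w a * w b) - D * (w a * w b)" by (simp add: g_def D_def algebra_simps)
        moreover have "D * (w a * w b) \<le> D * K^2" using D0 ww by (intro mult_left_mono) auto
        moreover have "(b - a) * (w a * w b) \<ge> G b - G a - \<eta> * (b - a)" using d(2)[of a b] P \<delta> by auto
        ultimately have gl: "- g a b \<le> - (G b - G a) + \<eta> * (b - a) + K^2 * D" by (simp add: algebra_simps)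
        show "- g a b \<le> (- G b + c * b) - (- G a + c * a) + (if a < T \<and> T < b then K^2 * \<delta> else 0)"
        proof (cases "a < T \<and> T < b")
          case True
          have n0: "0 \<le> norm (\<gamma> b - \<gamma> a)" by simp
          have "D \<le> \<delta>" using P n0 unfolding D_def by linarith
          then have "K^2 * D \<le> K^2 * \<delta>" by (intro mult_left_mono) auto
          moreover have "0 \<le> K^2 * \<kappa> * \<delta>^2 * (b - a)" using kap P by simp
          ultimately show ?thesis using gl True by (simp add: c_def algebra_simps)
        next
          case False
          then have "b \<le> T \<or> T \<le> a" by auto
          then have "D \<le> \<kappa> * (b - a)^3" using dfc[of a b] P by (simp add: D_def)
          also have "\<dots> = \<kappa> * (b - a)^2 * (b - a)" by (simp add: power3_eq_cube power2_eq_square)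
          also have "\<dots> \<le> \<kappa> * \<delta>^2 * (b - a)"
            using P kap by (intro mult_right_mono mult_left_mono power_mono) auto
          finally have "K^2 * D \<le> K^2 * (\<kappa> * \<delta>^2 * (b - a))" by (intro mult_left_mono) auto
          moreover have "(if a < T \<and> T < b then K^2 * \<delta> else 0) = 0" by (rule if_not_P[OF False])
          ultimately show ?thesis using gl by (simp add: c_def algebra_simps)
        qed
      qed
      have "sum_list (map (\<lambda>(a,b). - g a b) (zip ts (tl ts))) = - S ts"
        unfolding S_def by (induction ts rule: induct_list012) auto
      with lo sw have lo': "- S ts \<le> - I + c * l + K^2 * \<delta>" by (simp add: I_def)
      from up sw have up': "S ts \<le> I + \<eta> * l" by (simp add: I_def)
      have "\<eta> * l = \<epsilon> / 3" using l by (simp add: \<eta>_def)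
      have "K^2 * \<kappa> * \<delta>^2 * l + K^2 * \<delta> \<le> K^2 * \<kappa> * \<delta> * l + K^2 * \<delta>"
      proof -
        have "\<delta>^2 \<le> \<delta>" using \<delta> by (simp add: power2_eq_square mult_le_cancel_left1)
        then show ?thesis using kap l by (intro add_mono mult_right_mono mult_left_mono) auto
      qed
      also have "\<dots> = M * \<delta>" by (simp add: M_def algebra_simps)
      also have "\<dots> \<le> M * (\<epsilon> / (3 * M))" using M \<delta> by (intro mult_left_mono) auto
      also have "\<dots> = \<epsilon> / 3" using M by simp
      finally have "K^2 * \<kappa> * \<delta>^2 * l + K^2 * \<delta> \<le> \<epsilon> / 3" .
      then have "c * l + K^2 * \<delta> \<le> 2 * \<epsilon> / 3" using \<open>\<eta> * l = \<epsilon> / 3\<close> by (simp add: c_def algebra_simps)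
      then show "\<bar>S ts - I\<bar> < \<epsilon>" using lo' up' \<open>\<eta> * l = \<epsilon> / 3\<close> that by auto
    qed
  qed
  have bnd: "S ts \<le> H l - H 0 + K^2 * \<delta>" if ts: "is_partition l ts" "mesh ts < \<delta>" for ts \<delta>
  proof -
    have sw: "sorted_wrt (<) ts" "ts \<noteq> []" "hd ts = 0" "last ts = l" using ts by (auto simp: is_partition_def)
    have PP: "0 \<le> a \<and> a < b \<and> b \<le> l \<and> b - a < \<delta>" if "(a,b) \<in> set (zip ts (tl ts))" for a b
      using pair_props[OF ts(1) that] ts(2) by auto
    have "\<delta> > 0" using ts(2) mesh_nonneg[of ts] by linarith
    have "S ts \<le> H (last ts) - H (hd ts) + K^2 * \<delta>"
      unfolding S_def
    proof (rule tele[OF sw(1,2)])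
      show "0 \<le> K^2 * \<delta>" using \<open>\<delta> > 0\<close> by simp
      fix a b assume ab: "(a,b) \<in> set (zip ts (tl ts))"
      note P = PP[OF ab]
      have ww: "0 \<le> w a * w b" "w a * w b \<le> K^2"
        using wK[of a] wK[of b] P by (auto simp: power2_eq_square intro: mult_mono)
      have g1: "g a b \<le> (b - a) * (w a * w b)"
        unfolding g_def using lip[of a b] P ww by (intro mult_right_mono) auto
      show "g a b \<le> H b - H a + (if a < T \<and> T < b then K^2 * \<delta> else 0)"
      proof (cases "a < T \<and> T < b")
        case True
        have "(b - a) * (w a * w b) \<le> \<delta> * K^2" using P ww by (intro mult_mono) auto
        then show ?thesis using g1 True Hm[of a b] P by (simp add: algebra_simps)
      next
        case False
        then have "b \<le> T \<or> T \<le> a" by auto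
        then have "(b - a) * (w a * w b) \<le> H b - H a" using Hb[of a b] P by (simp add: w_def)
        moreover have "(if a < T \<and> T < b then K^2 * \<delta> else 0) = 0" by (rule if_not_P[OF False])
        ultimately show ?thesis using g1 by linarith
      qed
    qed
    then show ?thesis using sw by simp
  qed
  have "I \<le> H l - H 0"
  proof (rule field_le_epsilon)
    fix e :: real assume e: "0 < e"
    obtain \<delta>1 where \<delta>1: "\<delta>1 > 0" "\<forall>ts. is_partition l ts \<and> mesh ts < \<delta>1 \<longrightarrow> \<bar>S ts - I\<bar> < e / 2"
      using conv[of "e/2"] e by auto
    define \<delta> where "\<delta> = min \<delta>1 (e / (2 * K^2))"
    have \<delta>: "0 < \<delta>" "\<delta> \<le> \<delta>1" "K^2 * \<delta> \<le> e / 2"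
      using \<delta>1 e K(1) by (auto simp: \<delta>_def min_def field_simps)
    obtain ts where ts: "is_partition l ts" "mesh ts < \<delta>" using exists_partition[OF l(1) \<delta>(1)] by blast
    have "\<bar>S ts - I\<bar> < e / 2" using \<delta>1(2) ts \<delta>(2) by auto
    moreover have "S ts \<le> H l - H 0 + K^2 * \<delta>" by (rule bnd[OF ts])
    ultimately show "I \<le> H l - H 0 + e" using \<delta>(3) by linarith
  qed
  moreover have "has_M_length (rhoM f) l \<gamma> (ereal I)"
    by (rule has_M_length_real[OF eq conv]) auto
  ultimately show ?thesis by blast
qed



lemma sin3: "(\<Sum>m<3. sin_coeff m * x ^ m) = (x::real)"
  by (simp add: sin_coeff_def eval_nat_numeral)

lemma fact3: "inverse (fact 3) = (1/6::real)"
  by (simp add: eval_nat_numeral)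

lemma sin_ge_cube: "0 \<le> (x::real) \<Longrightarrow> x - x^3/6 \<le> sin x"
proof -
  assume x: "0 \<le> x"
  have "\<bar>sin x - (\<Sum>m<3. sin_coeff m * x ^ m)\<bar> \<le> inverse (fact 3) * \<bar>x\<bar> ^ 3"
    by (rule Maclaurin_sin_bound)
  then have "\<bar>sin x - x\<bar> \<le> (1/6) * x ^ 3" unfolding sin3 fact3 using x by simp
  then show ?thesis by linarith
qed

lemma jordan: "0 \<le> x \<Longrightarrow> x \<le> pi/2 \<Longrightarrow> 2 * x / pi \<le> sin x"
proof -
  assume x: "0 \<le> x" "x \<le> pi/2"
  have cvx: "convex_on {0..pi/2} (\<lambda>x. 2 * x / pi - sin x)"
  proof (rule convex_on_realI[where f' = "\<lambda>x. 2 / pi - cos x"])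
    show "connected {0..pi/2}" by simp
    fix y assume "y \<in> {0..pi/2}"
    show "((\<lambda>x. 2 * x / pi - sin x) has_real_derivative 2 / pi - cos y) (at y)"
      by (auto intro!: derivative_eq_intros)
  next
    fix y z :: real assume "y \<in> {0..pi/2}" "z \<in> {0..pi/2}" "y \<le> z"
    then have "cos z \<le> cos y" by (intro cos_monotone_0_pi_le) auto
    then show "2 / pi - cos y \<le> 2 / pi - cos z" by simp
  qed
  define t where "t = x / (pi/2)"
  have t: "0 \<le> t" "t \<le> 1" using x pi_gt_zero by (auto simp: t_def field_simps)
  have xe: "(1 - t) *\<^sub>R 0 + t *\<^sub>R (pi/2) = x" using pi_gt_zero by (simp add: t_def)
  have "(\<lambda>x. 2 * x / pi - sin x) ((1 - t) *\<^sub>R 0 + t *\<^sub>R (pi/2))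
        \<le> (1 - t) * (\<lambda>x. 2 * x / pi - sin x) 0 + t * (\<lambda>x. 2 * x / pi - sin x) (pi/2)"
    by (rule convex_onD[OF cvx t]) auto
  then have "2 * x / pi - sin x \<le> 0" unfolding xe by simp
  then show ?thesis by simp
qed

lemma norm_comb:
  fixes p q :: "'a::euclidean_space"
  assumes "norm p = 1" "norm q = 1" "inner p q = 0"
  shows "norm (c *\<^sub>R p + d *\<^sub>R q) = sqrt (c^2 + d^2)"
proof -
  have pp: "inner p p = 1" and qq: "inner q q = 1"
    using assms power2_norm_eq_inner[of p] power2_norm_eq_inner[of q] by auto
  have "inner (c *\<^sub>R p + d *\<^sub>R q) (c *\<^sub>R p + d *\<^sub>R q) = c^2 + d^2"
    using pp qq assms(3) by (simp add: inner_add_left inner_add_right inner_commute[of q p] power2_eq_square)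
  then show ?thesis by (simp add: norm_eq_sqrt_inner)
qed

definition circ :: "real \<Rightarrow> 'a::euclidean_space \<Rightarrow> 'a \<Rightarrow> real \<Rightarrow> 'a" where
  "circ r p q s = r *\<^sub>R (cos (s / r) *\<^sub>R p + sin (s / r) *\<^sub>R q)"

lemma circ_norm:
  assumes "norm p = 1" "norm q = 1" "inner p q = 0" "0 \<le> r"
  shows "norm (circ r p q s) = r"
  using norm_comb[OF assms(1-3), of "cos (s/r)" "sin (s/r)"] assms(4) by (simp add: circ_def)

lemma circ_dist:
  assumes "norm p = 1" "norm q = 1" "inner p q = 0" "0 < r"
  shows "norm (circ r p q b - circ r p q a) = 2 * r * \<bar>sin ((b - a) / (2 * r))\<bar>"
proof -
  define A where "A = a / r"
  define B where "B = b / r"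
  define y where "y = (b - a) / (2 * r)"
  have By: "B - A = 2 * y" using assms(4) by (simp add: A_def B_def y_def field_simps)
  have "circ r p q b - circ r p q a = r *\<^sub>R ((cos B - cos A) *\<^sub>R p + (sin B - sin A) *\<^sub>R q)"
    by (simp add: circ_def A_def B_def algebra_simps)
  then have "norm (circ r p q b - circ r p q a) = r * sqrt ((cos B - cos A)^2 + (sin B - sin A)^2)"
    using norm_comb[OF assms(1-3)] assms(4) by simp
  also have "(cos B - cos A)^2 + (sin B - sin A)^2 = ((sin B)^2 + (cos B)^2) + ((sin A)^2 + (cos A)^2) - 2 * (cos B * cos A + sin B * sin A)"
    by algebra
  also have "\<dots> = 2 - 2 * cos (B - A)"
    using sin_cos_squared_add[of A] sin_cos_squared_add[of B] unfolding cos_diff by linarith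
  also have "\<dots> = (2 * sin y)^2" using By by (simp add: cos_double_sin power_mult_distrib)
  finally have X: "norm (circ r p q b - circ r p q a) = r * sqrt ((2 * sin y)^2)" .
  show ?thesis using X assms(4) unfolding real_sqrt_abs y_def by (simp add: abs_mult)
qed



definition piece_ok :: "(real \<Rightarrow> real) \<Rightarrow> (real \<Rightarrow> 'a::euclidean_space) \<Rightarrow> real \<Rightarrow> (real \<Rightarrow> real) \<Rightarrow> real \<Rightarrow> bool" where
  "piece_ok f P len Hp \<kappa> \<longleftrightarrow> 0 \<le> len \<and> continuous_on {0..len} P \<and> (\<forall>t\<in>{0..len}. 0 < f (norm (P t))) \<and>
    (\<forall>a b. 0 \<le> a \<longrightarrow> a \<le> b \<longrightarrow> b \<le> len \<longrightarrow> norm (P b - P a) \<le> b - a \<and>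
       b - a - norm (P b - P a) \<le> \<kappa> * (b - a)^3 \<and>
       (b - a) / (f (norm (P a)) * f (norm (P b))) \<le> Hp b - Hp a \<and> Hp a \<le> Hp b)"

lemma combine:
  fixes P1 P2 :: "real \<Rightarrow> 'a::euclidean_space"
  assumes p1: "piece_ok f P1 T H1 \<kappa>" and p2: "piece_ok f P2 (l - T) H2 \<kappa>" and j: "P1 T = P2 0"
    and l: "0 < l" "T \<le> l" and fc: "continuous_on {0..} f" and kap: "0 \<le> \<kappa>"
  shows "\<exists>L. rectifiable_path_on l (\<lambda>t. if t \<le> T then P1 t else P2 (t - T)) \<and>
             has_M_length (rhoM f) l (\<lambda>t. if t \<le> T then P1 t else P2 (t - T)) (ereal L) \<and>
             L \<le> (H1 T - H1 0) + (H2 (l - T) - H2 0)"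
proof -
  define \<gamma> where "\<gamma> t = (if t \<le> T then P1 t else P2 (t - T))" for t
  define H where "H t = (if t \<le> T then H1 t else H1 T + H2 (t - T) - H2 0)" for t
  have T0: "0 \<le> T" using p1 by (simp add: piece_ok_def)
  have c1: "continuous_on {0..T} P1" and c2: "continuous_on {0..l-T} P2"
    and f1: "\<And>t. t \<in> {0..T} \<Longrightarrow> 0 < f (norm (P1 t))" and f2: "\<And>t. t \<in> {0..l-T} \<Longrightarrow> 0 < f (norm (P2 t))"
    and q1: "\<And>a b. 0 \<le> a \<Longrightarrow> a \<le> b \<Longrightarrow> b \<le> T \<Longrightarrow> norm (P1 b - P1 a) \<le> b - a \<and>
       b - a - norm (P1 b - P1 a) \<le> \<kappa> * (b - a)^3 \<and>
       (b - a) / (f (norm (P1 a)) * f (norm (P1 b))) \<le> H1 b - H1 a \<and> H1 a \<le> H1 b"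
    and q2: "\<And>a b. 0 \<le> a \<Longrightarrow> a \<le> b \<Longrightarrow> b \<le> l - T \<Longrightarrow> norm (P2 b - P2 a) \<le> b - a \<and>
       b - a - norm (P2 b - P2 a) \<le> \<kappa> * (b - a)^3 \<and>
       (b - a) / (f (norm (P2 a)) * f (norm (P2 b))) \<le> H2 b - H2 a \<and> H2 a \<le> H2 b"
    using p1 p2 unfolding piece_ok_def by auto
  have g1: "\<gamma> t = P1 t" if "t \<le> T" for t using that by (simp add: \<gamma>_def)
  have g2: "\<gamma> t = P2 (t - T)" if "T \<le> t" for t using that j by (auto simp: \<gamma>_def)
  have h1: "H t = H1 t" if "t \<le> T" for t using that by (simp add: H_def)
  have h2: "H t = H1 T + H2 (t - T) - H2 0" if "T \<le> t" for t using that by (auto simp: H_def)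
  have gc: "continuous_on {0..l} \<gamma>"
    unfolding \<gamma>_def
  proof (rule continuous_on_cases_le[where h="\<lambda>t. t"])
    show "continuous_on {t \<in> {0..l}. t \<le> T} P1" by (rule continuous_on_subset[OF c1]) auto
    have "continuous_on {t \<in> {0..l}. T \<le> t} (P2 \<circ> (\<lambda>t. t - T))"
      by (rule continuous_on_compose) (auto intro!: continuous_intros continuous_on_subset[OF c2])
    then show "continuous_on {t \<in> {0..l}. T \<le> t} (\<lambda>t. P2 (t - T))" by (simp add: o_def)
  qed (auto intro: continuous_intros j)
  have fpos: "0 < f (norm (\<gamma> t))" if "t \<in> {0..l}" for t
  proof (cases "t \<le> T")
    case True then show ?thesis using f1[of t] that g1 by auto
  next
    case False then show ?thesis using f2[of "t - T"] that g2 by auto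
  qed
  have fgc: "continuous_on {0..l} (\<lambda>t. f (norm (\<gamma> t)))"
    by (rule continuous_on_compose2[OF fc, of _ "\<lambda>t. norm (\<gamma> t)"]) (auto intro!: continuous_intros gc)
  have lip: "norm (\<gamma> b - \<gamma> a) \<le> b - a" if "0 \<le> a" "a \<le> b" "b \<le> l" for a b
  proof -
    consider "b \<le> T" | "T \<le> a" | "a \<le> T" "T \<le> b" by linarith
    then show ?thesis
    proof cases
      case 1 then show ?thesis using q1[of a b] that g1 by auto
    next
      case 2 then show ?thesis using q2[of "a - T" "b - T"] that g2 by auto
    next
      case 3
      have "norm (\<gamma> b - \<gamma> a) \<le> norm (\<gamma> b - \<gamma> T) + norm (\<gamma> T - \<gamma> a)"
        by (rule order_trans[OF _ norm_triangle_ineq]) simp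
      also have "norm (\<gamma> T - \<gamma> a) \<le> T - a" using q1[of a T] that 3 g1 by auto
      also have "norm (\<gamma> b - \<gamma> T) \<le> b - T" using q2[of 0 "b - T"] that 3 g2 by auto
      finally show ?thesis by simp
    qed
  qed
  have dfc: "b - a - norm (\<gamma> b - \<gamma> a) \<le> \<kappa> * (b - a)^3"
    if "0 \<le> a" "a \<le> b" "b \<le> l" "b \<le> T \<or> T \<le> a" for a b
    using that(4)
  proof
    assume "b \<le> T" then show ?thesis using q1[of a b] that g1 by auto
  next
    assume "T \<le> a" then show ?thesis using q2[of "a - T" "b - T"] that g2 by auto
  qed
  have Hb: "(b - a) / (f (norm (\<gamma> a)) * f (norm (\<gamma> b))) \<le> H b - H a"
    if "0 \<le> a" "a \<le> b" "b \<le> l" "b \<le> T \<or> T \<le> a" for a b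
    using that(4)
  proof
    assume "b \<le> T" then show ?thesis using q1[of a b] that g1 h1 by auto
  next
    assume "T \<le> a" then show ?thesis using q2[of "a - T" "b - T"] that g2 h2 by auto
  qed
  have Hm: "H a \<le> H b" if "0 \<le> a" "a \<le> b" "b \<le> l" for a b
  proof -
    consider "b \<le> T" | "T \<le> a" | "a \<le> T" "T \<le> b" by linarith
    then show ?thesis
    proof cases
      case 1 then show ?thesis using q1[of a b] that h1 by auto
    next
      case 2 then show ?thesis using q2[of "a - T" "b - T"] that h2 by auto
    next
      case 3 then show ?thesis using q1[of a T] q2[of 0 "b - T"] that h1 h2 by auto
    qed
  qed
  obtain L where L: "has_M_length (rhoM f) l \<gamma> (ereal L)" "L \<le> H l - H 0"
    using path_main[OF l(1) T0 l(2) kap fgc fpos lip dfc Hb Hm] by blast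
  have "H l - H 0 = (H1 T - H1 0) + (H2 (l - T) - H2 0)"
    using h1[of 0] h2[of l] l T0 by simp
  moreover have "rectifiable_path_on l \<gamma>" by (rule rectifiable_lemma[OF l(1) gc lip])
  ultimately show ?thesis using L unfolding \<gamma>_def by auto
qed

lemma circ_ok:
  fixes p q :: "'a::euclidean_space"
  assumes pq: "norm p = 1" "norm q = 1" "inner p q = 0" and r: "0 \<le> r" and th: "0 \<le> \<theta>" "\<theta> \<le> pi"
    and fr: "0 < f r"
  shows "piece_ok f (circ r p q) (r * \<theta>) (\<lambda>s. s / (f r)^2) (1 / (24 * r^2))"
  unfolding piece_ok_def
proof (intro conjI allI impI ballI)
  show "0 \<le> r * \<theta>" using r th by simp
  show "continuous_on {0..r * \<theta>} (circ r p q)"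
    unfolding circ_def divide_inverse by (intro continuous_intros)
  fix t assume "t \<in> {0..r * \<theta>}"
  show "0 < f (norm (circ r p q t))" using circ_norm[OF pq r] fr by simp
next
  fix a b :: real assume ab: "0 \<le> a" "a \<le> b" "b \<le> r * \<theta>"
  have fr2: "0 < (f r)^2" using fr by simp
  have nrm: "norm (circ r p q x) = r" for x using circ_norm[OF pq r] .
  show "(b - a) / (f (norm (circ r p q a)) * f (norm (circ r p q b))) \<le> b / (f r)^2 - a / (f r)^2"
    unfolding nrm by (simp add: power2_eq_square diff_divide_distrib)
  show "a / (f r)^2 \<le> b / (f r)^2" using ab fr2 by (simp add: divide_right_mono)
  have main: "norm (circ r p q b - circ r p q a) \<le> b - a \<and>
      b - a - norm (circ r p q b - circ r p q a) \<le> 1 / (24 * r^2) * (b - a)^3"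
  proof (cases "r = 0")
    case True
    then have "a = 0" "b = 0" using ab by auto
    then show ?thesis by simp
  next
    case False
    then have rp: "0 < r" using r by simp
    define x where "x = (b - a) / (2 * r)"
    have x0: "0 \<le> x" using ab rp by (simp add: x_def)
    have "b - a \<le> r * pi" using ab th rp by (smt (verit) mult_left_mono)
    then have xp: "x \<le> pi / 2" using rp by (simp add: x_def field_simps)
    have sx: "0 \<le> sin x" using x0 xp by (intro sin_ge_zero) auto
    have nd: "norm (circ r p q b - circ r p q a) = 2 * r * sin x"
      using circ_dist[OF pq rp, of b a] sx by (simp add: x_def)
    have bx: "b - a = 2 * r * x" using rp by (simp add: x_def)
    have "2 * r * sin x \<le> 2 * r * x" using sin_x_le_x[OF x0] rp by simp
    moreover have "2 * r * (x - x^3/6) \<le> 2 * r * sin x" using sin_ge_cube[OF x0] rp by simp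
    moreover have "2 * r * x - 2 * r * (x - x^3/6) = 1 / (24 * r^2) * (b - a)^3"
      using rp by (simp add: bx field_simps power3_eq_cube power2_eq_square)
    ultimately show ?thesis using nd bx by (simp add: algebra_simps)
  qed
  show "norm (circ r p q b - circ r p q a) \<le> b - a" using main by simp
  show "b - a - norm (circ r p q b - circ r p q a) \<le> 1 / (24 * r^2) * (b - a)^3" using main by simp
qed

lemma seg_ok:
  fixes v :: "'a::euclidean_space"
  assumes v: "norm v = 1" and sg: "\<sigma> = 1 \<or> \<sigma> = -1" and len: "0 \<le> len"
    and rg: "m \<le> \<rho>1" "\<rho>1 \<le> M" "m \<le> \<rho>1 + \<sigma> * len" "\<rho>1 + \<sigma> * len \<le> M" "0 \<le> m"
    and fp: "\<And>t. m \<le> t \<Longrightarrow> t \<le> M \<Longrightarrow> 0 < f t"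
    and Ph: "\<And>p q. m \<le> p \<Longrightarrow> p \<le> q \<Longrightarrow> q \<le> M \<Longrightarrow> (q - p) / (f p * f q) \<le> \<Phi> q - \<Phi> p \<and> \<Phi> p \<le> \<Phi> q"
    and kap: "0 \<le> \<kappa>"
  shows "piece_ok f (\<lambda>s. (\<rho>1 + \<sigma> * s) *\<^sub>R v) len (\<lambda>s. \<sigma> * \<Phi> (\<rho>1 + \<sigma> * s)) \<kappa>"
proof -
  have inr: "m \<le> \<rho>1 + \<sigma> * s \<and> \<rho>1 + \<sigma> * s \<le> M" if "0 \<le> s" "s \<le> len" for s
    using sg
  proof
    assume "\<sigma> = 1" then show ?thesis using rg that by auto
  next
    assume "\<sigma> = -1" then show ?thesis using rg that by auto
  qed
  have nrm: "norm ((\<rho>1 + \<sigma> * s) *\<^sub>R v) = \<rho>1 + \<sigma> * s" if "0 \<le> s" "s \<le> len" for s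
    using inr[OF that] rg(5) v by simp
  have dst: "norm ((\<rho>1 + \<sigma> * b) *\<^sub>R v - (\<rho>1 + \<sigma> * a) *\<^sub>R v) = b - a" if "a \<le> b" for a b
  proof -
    have "(\<rho>1 + \<sigma> * b) *\<^sub>R v - (\<rho>1 + \<sigma> * a) *\<^sub>R v = (\<sigma> * (b - a)) *\<^sub>R v"
      by (simp add: algebra_simps)
    then show ?thesis using v sg that by auto
  qed
  show ?thesis
    unfolding piece_ok_def
  proof (intro conjI allI impI ballI)
    show "0 \<le> len" by (rule len)
    show "continuous_on {0..len} (\<lambda>s. (\<rho>1 + \<sigma> * s) *\<^sub>R v)" by (intro continuous_intros)
    fix t assume "t \<in> {0..len}"
    then show "0 < f (norm ((\<rho>1 + \<sigma> * t) *\<^sub>R v))" using nrm inr fp by auto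
  next
    fix a b :: real assume ab: "0 \<le> a" "a \<le> b" "b \<le> len"
    show "norm ((\<rho>1 + \<sigma> * b) *\<^sub>R v - (\<rho>1 + \<sigma> * a) *\<^sub>R v) \<le> b - a" using dst ab by simp
    show "b - a - norm ((\<rho>1 + \<sigma> * b) *\<^sub>R v - (\<rho>1 + \<sigma> * a) *\<^sub>R v) \<le> \<kappa> * (b - a)^3"
      using dst[OF ab(2)] kap ab by simp
    have na: "norm ((\<rho>1 + \<sigma> * a) *\<^sub>R v) = \<rho>1 + \<sigma> * a" and nb: "norm ((\<rho>1 + \<sigma> * b) *\<^sub>R v) = \<rho>1 + \<sigma> * b"
      using nrm ab by auto
    have ia: "m \<le> \<rho>1 + \<sigma> * a" "\<rho>1 + \<sigma> * a \<le> M" and ib: "m \<le> \<rho>1 + \<sigma> * b" "\<rho>1 + \<sigma> * b \<le> M"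
      using inr ab by auto
    have "(b - a) / (f (\<rho>1 + \<sigma> * a) * f (\<rho>1 + \<sigma> * b)) \<le> \<sigma> * \<Phi> (\<rho>1 + \<sigma> * b) - \<sigma> * \<Phi> (\<rho>1 + \<sigma> * a) \<and>
          \<sigma> * \<Phi> (\<rho>1 + \<sigma> * a) \<le> \<sigma> * \<Phi> (\<rho>1 + \<sigma> * b)"
      using sg
    proof
      assume s: "\<sigma> = 1"
      show ?thesis using Ph[of "\<rho>1 + a" "\<rho>1 + b"] ia ib ab s by simp
    next
      assume s: "\<sigma> = -1"
      show ?thesis using Ph[of "\<rho>1 - b" "\<rho>1 - a"] ia ib ab s by (simp add: mult.commute)
    qed
    then show "(b - a) / (f (norm ((\<rho>1 + \<sigma> * a) *\<^sub>R v)) * f (norm ((\<rho>1 + \<sigma> * b) *\<^sub>R v)))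
               \<le> \<sigma> * \<Phi> (\<rho>1 + \<sigma> * b) - \<sigma> * \<Phi> (\<rho>1 + \<sigma> * a)"
      and "\<sigma> * \<Phi> (\<rho>1 + \<sigma> * a) \<le> \<sigma> * \<Phi> (\<rho>1 + \<sigma> * b)" unfolding na nb by auto
  qed
qed



definition Phi :: "(real \<Rightarrow> real) \<Rightarrow> real \<Rightarrow> real \<Rightarrow> real \<Rightarrow> real" where
  "Phi f m M t = (let s = M * f m / f M in
     if t \<le> s then (t - m) / (f m)^2 else (s - m) / (f m)^2 + M^2 / (f M)^2 * (1 / s - 1 / t))"

lemma frac_shrink: "0 \<le> (x::real) \<Longrightarrow> 0 < A \<Longrightarrow> A \<le> B \<Longrightarrow> x / B \<le> x / A"
  by (simp add: divide_left_mono)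

lemma Phi_props:
  fixes f :: "real \<Rightarrow> real"
  assumes mono: "mono_on {0..} f" and anti: "antimono_on {0<..} (\<lambda>t. f t / t)"
    and mM: "0 \<le> m" "m \<le> M" "0 < M" and fm: "0 < f m" and fM: "0 < f M"
  shows "\<And>p q. m \<le> p \<Longrightarrow> p \<le> q \<Longrightarrow> q \<le> M \<Longrightarrow>
           (q - p) / (f p * f q) \<le> Phi f m M q - Phi f m M p \<and> Phi f m M p \<le> Phi f m M q"
    and "Phi f m M M - Phi f m M m \<le> 2 * (M - m) / (f m * f M)"
proof -
  define s where "s = M * f m / f M"
  have F1: "f m \<le> f t" if "m \<le> t" for t
    using mono[unfolded mono_on_def] that mM by auto
  have F2: "f M * t / M \<le> f t" if "0 < t" "t \<le> M" for t
  proof -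
    have "f M / M \<le> f t / t" using anti[unfolded monotone_on_def] that mM by auto
    then show ?thesis using that by (simp add: field_simps)
  qed
  have fmM: "f m \<le> f M" using F1[of M] mM by simp
  have s0: "0 < s" using mM fm fM by (simp add: s_def)
  have sM: "s \<le> M" using fmM fM mM by (simp add: s_def field_simps)
  have ms: "m \<le> s"
  proof (cases "m = 0")
    case True then show ?thesis using s0 by simp
  next
    case False
    then have "f M * m / M \<le> f m" using F2[of m] mM by simp
    then show ?thesis using fM mM by (simp add: s_def field_simps)
  qed
  have fms: "f m = f M * s / M" using fM mM by (simp add: s_def)
  have Ph: "Phi f m M t = (if t \<le> s then (t - m) / (f m)^2 else (s - m) / (f m)^2 + M^2 / (f M)^2 * (1 / s - 1 / t))" for t
    by (simp add: Phi_def s_def Let_def)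
  show pair: "(q - p) / (f p * f q) \<le> Phi f m M q - Phi f m M p \<and> Phi f m M p \<le> Phi f m M q"
    if pq: "m \<le> p" "p \<le> q" "q \<le> M" for p q
  proof -
    have fp: "f m \<le> f p" and fq: "f m \<le> f q" using F1 pq by auto
    have fpp: "0 < f p" "0 < f q" using fp fq fm by auto
    have nn: "0 \<le> (q - p) / (f p * f q)" using pq fpp by simp
    have key: "(q - p) / (f p * f q) \<le> Phi f m M q - Phi f m M p"
    proof -
      consider "q \<le> s" | "s < p" | "p \<le> s" "s < q" by linarith
      then show ?thesis
      proof cases
        case 1
        have "(f m)^2 \<le> f p * f q" using fp fq fm unfolding power2_eq_square by (intro mult_mono) auto
        then have "(q - p) / (f p * f q) \<le> (q - p) / (f m)^2" using pq fm by (intro frac_shrink) auto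
        also have "\<dots> = Phi f m M q - Phi f m M p" using 1 pq by (simp add: Ph diff_divide_distrib)
        finally show ?thesis .
      next
        case 2
        have p0: "0 < p" using s0 2 by simp
        have "(f M * p / M) * (f M * q / M) \<le> f p * f q"
          using F2[of p] F2[of q] pq p0 fM mM fpp by (intro mult_mono) auto
        moreover have "(f M * p / M) * (f M * q / M) = (f M)^2 * p * q / M^2" by (simp add: power2_eq_square)
        ultimately have "(q - p) / (f p * f q) \<le> (q - p) / ((f M)^2 * p * q / M^2)"
          using pq p0 fM mM by (intro frac_shrink) auto
        also have "\<dots> = M^2 / (f M)^2 * (1 / p - 1 / q)" using p0 pq fM mM by (simp add: field_simps)
        also have "\<dots> = Phi f m M q - Phi f m M p"
        proof -
          have "Phi f m M q = (s - m) / (f m)^2 + M^2 / (f M)^2 * (1 / s - 1 / q)"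
               "Phi f m M p = (s - m) / (f m)^2 + M^2 / (f M)^2 * (1 / s - 1 / p)"
            using 2 pq by (simp_all add: Ph)
          then show ?thesis by (simp only: right_diff_distrib)
        qed
        finally show ?thesis .
      next
        case 3
        have "(s - p) / (f p * f q) \<le> (s - p) / (f m)^2"
        proof (rule frac_shrink)
          show "(f m)^2 \<le> f p * f q" using fp fq fm unfolding power2_eq_square by (intro mult_mono) auto
        qed (use 3 fm in auto)
        moreover have "(q - s) / (f p * f q) \<le> M^2 / (f M)^2 * (1 / s - 1 / q)"
        proof -
          have q0: "0 < q" using s0 3 by simp
          have "(f M * s / M) * (f M * q / M) \<le> f p * f q"
            using fms fp F2[of q] pq q0 fM mM s0 fpp by (intro mult_mono) auto
          moreover have "(f M * s / M) * (f M * q / M) = (f M)^2 * s * q / M^2" by (simp add: power2_eq_square)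
          ultimately have "(q - s) / (f p * f q) \<le> (q - s) / ((f M)^2 * s * q / M^2)"
            using 3 q0 s0 fM mM by (intro frac_shrink) auto
          also have "\<dots> = M^2 / (f M)^2 * (1 / s - 1 / q)" using q0 s0 fM mM by (simp add: field_simps)
          finally show ?thesis .
        qed
        ultimately have "(q - p) / (f p * f q) \<le> (s - p) / (f m)^2 + M^2 / (f M)^2 * (1 / s - 1 / q)"
          by (simp add: diff_divide_distrib)
        also have "\<dots> = Phi f m M q - Phi f m M p" using 3 by (simp add: Ph diff_divide_distrib)
        finally show ?thesis .
      qed
    qed
    then show ?thesis using nn by linarith
  qed
  have Pm: "Phi f m M m = 0" using ms by (simp add: Ph)
  show "Phi f m M M - Phi f m M m \<le> 2 * (M - m) / (f m * f M)"
  proof (cases "M \<le> s")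
    case True
    then have "s = M" using sM by simp
    then have "f m = f M" using fms mM by simp
    then have "Phi f m M M = (M - m) / (f m * f M)" using True by (simp add: Ph power2_eq_square)
    moreover have "0 \<le> (M - m) / (f m * f M)" using mM fm fM by simp
    moreover have "2 * (M - m) / (f m * f M) = 2 * ((M - m) / (f m * f M))" by simp
    ultimately show ?thesis using Pm by linarith
  next
    case False
    define a where "a = f m"
    define b where "b = f M"
    have a: "0 < a" and b: "0 < b" and ab: "a \<le> b" using fm fM fmM by (auto simp: a_def b_def)
    have sd: "s = M * a / b" by (simp add: s_def a_def b_def)
    have "Phi f m M M = (s - m) / a^2 + M^2 / b^2 * (1 / s - 1 / M)" using False by (simp add: Ph a_def b_def)
    also have "\<dots> = 2 * M / (a * b) - m / a^2 - M / b^2"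
      using a b mM by (simp add: sd field_simps power2_eq_square)
    finally have PM: "Phi f m M M = 2 * M / (a * b) - m / a^2 - M / b^2" .
    have i1: "m / (a * b) \<le> m / a^2" using a ab mM unfolding power2_eq_square
      by (intro frac_shrink) (auto intro: mult_left_mono)
    have "m \<le> M * a / b" using ms sd by simp
    then have "m * b \<le> M * a" using b by (simp add: field_simps)
    then have i2: "m / (a * b) \<le> M / b^2" using a b by (simp add: field_simps power2_eq_square)
    have "Phi f m M M - Phi f m M m = 2 * M / (a * b) - m / a^2 - M / b^2" using PM Pm by simp
    also have "\<dots> \<le> 2 * (M - m) / (a * b)" using i1 i2 by (simp add: diff_divide_distrib)
    finally show ?thesis by (simp add: a_def b_def)
  qed
qed



lemma f_cont:
  fixes f :: "real \<Rightarrow> real"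
  assumes mono: "mono_on {0..} f" and cvx: "convex_on {0..} f"
  shows "continuous_on {0..} f"
proof -
  have c1: "continuous_on {0<..} f"
    by (rule convex_on_continuous) (auto intro: convex_on_subset[OF cvx])
  have "continuous (at x within {0..}) f" if "x \<in> {0..}" for x
  proof (cases "x = 0")
    case False
    then have "x \<in> {0<..}" using that by auto
    then have "isCont f x" using c1 by (simp add: continuous_on_eq_continuous_at)
    then show ?thesis by (rule continuous_at_imp_continuous_within)
  next
    case True
    have ev: "eventually (\<lambda>t. t \<in> {0<..<1}) (at (0::real) within {0..})"
      unfolding eventually_at_filter by (auto simp: eventually_nhds_metric dist_real_def intro!: exI[of _ 1])
    have up: "f t \<le> (1 - t) * f 0 + t * f 1" if "t \<in> {0<..<1}" for t
      using convex_onD[OF cvx, of t 0 1] that by simp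
    have lo: "f 0 \<le> f t" if "t \<in> {0<..<1}" for t
      using mono[unfolded mono_on_def] that by auto
    have "(f \<longlongrightarrow> f 0) (at 0 within {0..})"
    proof (rule tendsto_sandwich[where f="\<lambda>_. f 0" and h="\<lambda>t. (1 - t) * f 0 + t * f 1"])
      show "eventually (\<lambda>t. f 0 \<le> f t) (at 0 within {0..})" using ev by (rule eventually_mono) (rule lo)
      show "eventually (\<lambda>t. f t \<le> (1 - t) * f 0 + t * f 1) (at 0 within {0..})" using ev by (rule eventually_mono) (rule up)
      have "((\<lambda>t. (1 - t) * f 0 + t * f 1) \<longlongrightarrow> (1 - 0) * f 0 + 0 * f 1) (at 0 within {0..})"
        by (intro tendsto_intros)
      then show "((\<lambda>t. (1 - t) * f 0 + t * f 1) \<longlongrightarrow> f 0) (at 0 within {0..})" by simp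
    qed simp
    then show ?thesis using True by (simp add: continuous_within)
  qed
  then show ?thesis by (simp add: continuous_on_eq_continuous_within)
qed

lemma arc_data:
  fixes u v :: "'a::euclidean_space"
  assumes dim: "DIM('a) \<ge> 2" and u: "norm u = 1" and v: "norm v = 1"
  shows "\<exists>\<theta> q. 0 \<le> \<theta> \<and> \<theta> \<le> pi \<and> norm q = 1 \<and> inner u q = 0 \<and>
           v = cos \<theta> *\<^sub>R u + sin \<theta> *\<^sub>R q \<and> cos \<theta> = inner u v"
proof -
  define c where "c = inner u v"
  have "\<bar>c\<bar> \<le> 1" using Cauchy_Schwarz_ineq2[of u v] u v by (simp add: c_def)
  then have c1: "-1 \<le> c" "c \<le> 1" by auto
  define \<theta> where "\<theta> = arccos c"
  have th: "0 \<le> \<theta>" "\<theta> \<le> pi" "cos \<theta> = c" "sin \<theta> = sqrt (1 - c^2)"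
    using c1 by (auto simp: \<theta>_def arccos_lbound arccos_ubound sin_arccos)
  define w where "w = v - c *\<^sub>R u"
  have uu: "inner u u = 1" and vv: "inner v v = 1"
    using u v power2_norm_eq_inner[of u] power2_norm_eq_inner[of v] by auto
  have uw: "inner u w = 0" using uu by (simp add: w_def c_def inner_diff_right)
  have "inner w w = 1 - c^2"
    using uu vv by (simp add: w_def inner_diff_left inner_diff_right c_def inner_commute[of v u] power2_eq_square)
  then have nw: "norm w = sqrt (1 - c^2)" by (simp add: norm_eq_sqrt_inner)
  show ?thesis
  proof (cases "w = 0")
    case False
    define q where "q = w /\<^sub>R norm w"
    have "norm q = 1" using False by (simp add: q_def)
    moreover have "inner u q = 0" using uw by (simp add: q_def)
    moreover have "v = cos \<theta> *\<^sub>R u + sin \<theta> *\<^sub>R q"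
    proof -
      have "norm w \<noteq> 0" using False by simp
      then have "sin \<theta> *\<^sub>R q = w" using th nw by (simp add: q_def)
      then show ?thesis using th by (simp add: w_def)
    qed
    moreover have "cos \<theta> = inner u v" using th by (simp add: c_def)
    ultimately show ?thesis using th by blast
  next
    case True
    obtain z where z: "z \<noteq> 0" "orthogonal u z" using orthogonal_to_vector_exists[OF dim] by blast
    define q where "q = z /\<^sub>R norm z"
    have "norm q = 1" using z by (simp add: q_def)
    moreover have "inner u q = 0" using z by (simp add: q_def orthogonal_def)
    moreover have "sin \<theta> = 0" using th nw True by simp
    moreover have "v = c *\<^sub>R u" using True by (simp add: w_def)
    ultimately have "v = cos \<theta> *\<^sub>R u + sin \<theta> *\<^sub>R q" using th by simp
    moreover have "cos \<theta> = inner u v" using th by (simp add: c_def)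
    ultimately show ?thesis using th \<open>norm q = 1\<close> \<open>inner u q = 0\<close> by blast
  qed
qed

lemma cs2: "a1 * b1 + a2 * b2 \<le> sqrt (a1^2 + a2^2) * sqrt (b1^2 + b2^2)" for a1 a2 b1 b2 :: real
proof -
  have "(a1 * b1 + a2 * b2)^2 \<le> (a1^2 + a2^2) * (b1^2 + b2^2)"
  proof -
    have "0 \<le> (a1 * b2 - a2 * b1)^2" by simp
    then show ?thesis by (simp add: power2_eq_square algebra_simps)
  qed
  then show ?thesis by (simp add: real_sqrt_mult[symmetric] real_le_rsqrt)
qed

lemma final_ineq:
  fixes fx fy r R \<theta> d z :: real
  assumes f: "0 < fx" "0 < fy" and r: "0 \<le> r" "0 \<le> R" and th: "0 \<le> \<theta>" "\<theta> \<le> pi"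
    and z: "0 \<le> z" "z \<le> r / fx^2 \<or> z \<le> R / fy^2" and zz: "z \<le> r / fx^2" "z \<le> R / fy^2"
    and d: "0 \<le> d" "d^2 = r^2 + R^2 - 2 * r * R * cos \<theta>"
  shows "z * \<theta> + 2 * \<bar>R - r\<bar> / (fx * fy) \<le> sqrt (pi^2/4 + 4) * d / (fx * fy)"
proof -
  define g where "g = sqrt (r * R) / (fx * fy)"
  have "z * z \<le> (r / fx^2) * (R / fy^2)"
    using z zz r f by (intro mult_mono) auto
  then have "z^2 \<le> (r / fx^2) * (R / fy^2)" by (simp add: power2_eq_square)
  also have "\<dots> = g^2" using r f by (simp add: g_def power_divide power_mult_distrib)
  finally have "z^2 \<le> g^2" .
  then have zg: "z \<le> g" using z r f by (simp add: g_def power2_le_iff_abs_le)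
  have s0: "0 \<le> sin (\<theta>/2)" using th by (intro sin_ge_zero) auto
  have "2 * (\<theta>/2) / pi \<le> sin (\<theta>/2)" using th by (intro jordan) auto
  then have tj: "\<theta> \<le> pi * sin (\<theta>/2)" using pi_gt_zero by (simp add: field_simps)
  have "z * \<theta> \<le> g * (pi * sin (\<theta>/2))" using zg tj z th by (intro mult_mono) (auto simp: g_def)
  define A where "A = 2 * sqrt (r * R) * sin (\<theta>/2)"
  define B where "B = \<bar>R - r\<bar>"
  have gA: "g * (pi * sin (\<theta>/2)) = (pi/2) * A / (fx * fy)" by (simp add: g_def A_def)
  have cth: "cos \<theta> = 1 - 2 * (sin (\<theta>/2))^2" using cos_double_sin[of "\<theta>/2"] by simp
  have AB0: "A^2 + B^2 = d^2"
    using r d(2) cth by (simp add: A_def B_def power_mult_distrib power2_eq_square algebra_simps)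
  have AB: "sqrt (A^2 + B^2) = d" unfolding AB0 using d(1) by simp
  have "(pi/2) * A + 2 * B \<le> sqrt ((pi/2)^2 + 2^2) * sqrt (A^2 + B^2)" by (rule cs2)
  also have "(pi/2)^2 + 2^2 = pi^2/4 + 4" by (simp add: power_divide)
  finally have cs: "(pi/2) * A + 2 * B \<le> sqrt (pi^2/4 + 4) * d" using AB by simp
  have "z * \<theta> + 2 * \<bar>R - r\<bar> / (fx * fy) \<le> ((pi/2) * A + 2 * B) / (fx * fy)"
    using \<open>z * \<theta> \<le> g * (pi * sin (\<theta>/2))\<close> gA by (simp add: B_def add_divide_distrib)
  also have "\<dots> \<le> sqrt (pi^2/4 + 4) * d / (fx * fy)" using cs f by (simp add: divide_right_mono)
  finally show ?thesis .
qed



lemma circ_0: "circ r u q 0 = r *\<^sub>R u"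
  by (simp add: circ_def)

lemma circ_end: "circ r u q (r * \<theta>) = r *\<^sub>R (cos \<theta> *\<^sub>R u + sin \<theta> *\<^sub>R q)"
  by (cases "r = 0") (simp_all add: circ_def)

lemma seg_piece:
  fixes f :: "real \<Rightarrow> real" and e :: "'a::euclidean_space"
  assumes mono: "mono_on {0..} f" and anti: "antimono_on {0<..} (\<lambda>t. f t / t)"
    and fr: "0 < f r" and fR: "0 < f R" and r: "0 \<le> r" "0 \<le> R" "0 < max r R"
    and e: "norm e = 1" and kap: "0 \<le> \<kappa>"
  shows "piece_ok f (\<lambda>s. (r + (if r \<le> R then 1 else -1) * s) *\<^sub>R e) \<bar>R - r\<bar>
           (\<lambda>s. (if r \<le> R then 1 else -1) * Phi f (min r R) (max r R) (r + (if r \<le> R then 1 else -1) * s)) \<kappa>"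
    and "(if r \<le> R then 1 else -1) * Phi f (min r R) (max r R) (r + (if r \<le> R then 1 else -1) * \<bar>R - r\<bar>)
         - (if r \<le> R then 1 else -1) * Phi f (min r R) (max r R) (r + (if r \<le> R then 1 else -1) * 0)
         \<le> 2 * \<bar>R - r\<bar> / (f r * f R)"
proof -
  define \<sigma> :: real where "\<sigma> = (if r \<le> R then 1 else -1)"
  define m where "m = min r R"
  define M where "M = max r R"
  have fm: "0 < f m" using fr fR by (simp add: m_def min_def)
  have fM: "0 < f M" using fr fR by (simp add: M_def max_def)
  have mM: "0 \<le> m" "m \<le> M" "0 < M" using r by (auto simp: m_def M_def)
  note PP = Phi_props[OF mono anti mM fm fM]
  have end1: "r + \<sigma> * \<bar>R - r\<bar> = R" by (simp add: \<sigma>_def)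
  have fp: "0 < f t" if "m \<le> t" "t \<le> M" for t
    using mono[unfolded mono_on_def, rule_format, of m t] that mM fm by auto
  have "piece_ok f (\<lambda>s. (r + \<sigma> * s) *\<^sub>R e) \<bar>R - r\<bar> (\<lambda>s. \<sigma> * Phi f m M (r + \<sigma> * s)) \<kappa>"
  proof (rule seg_ok[OF e _ _ _ _ _ _ mM(1) fp PP(1) kap])
    show "\<sigma> = 1 \<or> \<sigma> = -1" by (simp add: \<sigma>_def)
  qed (auto simp: end1 m_def M_def)
  then show "piece_ok f (\<lambda>s. (r + (if r \<le> R then 1 else -1) * s) *\<^sub>R e) \<bar>R - r\<bar>
           (\<lambda>s. (if r \<le> R then 1 else -1) * Phi f (min r R) (max r R) (r + (if r \<le> R then 1 else -1) * s)) \<kappa>"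
    by (simp add: \<sigma>_def m_def M_def)
  have "\<sigma> * Phi f m M (r + \<sigma> * \<bar>R - r\<bar>) - \<sigma> * Phi f m M (r + \<sigma> * 0) \<le> 2 * \<bar>R - r\<bar> / (f r * f R)"
  proof (cases "r \<le> R")
    case True
    then show ?thesis using PP(2) by (simp add: \<sigma>_def m_def M_def)
  next
    case False
    then show ?thesis using PP(2) by (simp add: \<sigma>_def m_def M_def mult.commute)
  qed
  then show "(if r \<le> R then 1 else -1) * Phi f (min r R) (max r R) (r + (if r \<le> R then 1 else -1) * \<bar>R - r\<bar>)
         - (if r \<le> R then 1 else -1) * Phi f (min r R) (max r R) (r + (if r \<le> R then 1 else -1) * 0)
         \<le> 2 * \<bar>R - r\<bar> / (f r * f R)"
    by (simp add: \<sigma>_def m_def M_def)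
qed

lemma dist_sq:
  fixes x y u v :: "'a::euclidean_space"
  assumes "x = r *\<^sub>R u" "y = R *\<^sub>R v" "norm u = 1" "norm v = 1" "inner u v = c" "0 \<le> r" "0 \<le> R"
  shows "(dist x y)^2 = (norm x)^2 + (norm y)^2 - 2 * norm x * norm y * c"
proof -
  have nx: "norm x = r" and ny: "norm y = R" using assms by auto
  have "(dist x y)^2 = inner (x - y) (x - y)" by (simp add: dist_norm power2_norm_eq_inner)
  also have "\<dots> = inner x x + inner y y - 2 * inner x y"
    by (simp add: inner_diff_left inner_diff_right inner_commute[of y x])
  also have "inner x y = r * R * c" using assms by simp
  finally show ?thesis using nx ny by (simp add: power2_norm_eq_inner[symmetric])
qed

lemma caseA:
  fixes f :: "real \<Rightarrow> real" and x y :: "'a::euclidean_space"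
  assumes dim: "DIM('a) \<ge> 2" and mono: "mono_on {0..} f" and anti: "antimono_on {0<..} (\<lambda>t. f t / t)"
    and fc: "continuous_on {0..} f" and xy: "x \<noteq> y" and fx: "0 < f (norm x)" and fy: "0 < f (norm y)"
    and A: "norm x / (f (norm x))^2 \<le> norm y / (f (norm y))^2"
  shows "\<exists>L l \<gamma>. rectifiable_path_on l \<gamma> \<and> \<gamma> 0 = x \<and> \<gamma> l = y \<and> has_M_length (rhoM f) l \<gamma> (ereal L) \<and>
           L \<le> sqrt (pi^2/4 + 4) * dist x y / (f (norm x) * f (norm y))"
proof -
  define r where "r = norm x"
  define R where "R = norm y"
  have r0: "0 \<le> r" "0 \<le> R" by (auto simp: r_def R_def)
  have y0: "y \<noteq> 0"
  proof
    assume "y = 0"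
    then have "norm x / (f (norm x))^2 \<le> 0" using A by simp
    then have "norm x \<le> 0" using fx by (simp add: divide_le_0_iff)
    then show False using xy \<open>y = 0\<close> by simp
  qed
  have Rp: "0 < R" using y0 by (simp add: R_def)
  define v where "v = y /\<^sub>R R"
  define u where "u = (if x = 0 then v else x /\<^sub>R r)"
  have nv: "norm v = 1" using Rp by (simp add: v_def R_def)
  have nu: "norm u = 1" using nv by (simp add: u_def r_def)
  have xu: "x = r *\<^sub>R u" by (cases "x = 0") (auto simp: u_def r_def)
  have yv: "y = R *\<^sub>R v" using Rp by (simp add: v_def)
  obtain \<theta> q where th: "0 \<le> \<theta>" "\<theta> \<le> pi" and q: "norm q = 1" "inner u q = 0"
    and vq: "v = cos \<theta> *\<^sub>R u + sin \<theta> *\<^sub>R q" and cth: "cos \<theta> = inner u v"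
    using arc_data[OF dim nu nv] by blast
  define \<sigma> :: real where "\<sigma> = (if r \<le> R then 1 else -1)"
  define \<kappa> where "\<kappa> = 1 / (24 * r^2)"
  have kap: "0 \<le> \<kappa>" by (simp add: \<kappa>_def)
  define T where "T = r * \<theta>"
  define l where "l = T + \<bar>R - r\<bar>"
  define P1 where "P1 = circ r u q"
  define H1 where "H1 = (\<lambda>s::real. s / (f r)^2)"
  define P2 where "P2 = (\<lambda>s. (r + \<sigma> * s) *\<^sub>R v)"
  define H2 where "H2 = (\<lambda>s. \<sigma> * Phi f (min r R) (max r R) (r + \<sigma> * s))"
  have frr: "0 < f r" "0 < f R" using fx fy by (auto simp: r_def R_def)
  have p1: "piece_ok f P1 T H1 \<kappa>"
    unfolding P1_def T_def H1_def \<kappa>_def by (rule circ_ok[where f=f, OF nu q r0(1) th frr(1)])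
  have lT: "l - T = \<bar>R - r\<bar>" by (simp add: l_def)
  have mx: "0 < max r R" using Rp by simp
  note SP = seg_piece[OF mono anti frr r0 mx nv kap]
  have p2: "piece_ok f P2 (l - T) H2 \<kappa>" unfolding lT P2_def H2_def \<sigma>_def by (rule SP(1))
  have j: "P1 T = P2 0" unfolding P1_def T_def P2_def circ_end by (simp add: vq[symmetric])
  have T0: "0 \<le> T" using r0 th by (simp add: T_def)
  have lp: "0 < l"
  proof (rule ccontr)
    assume "\<not> 0 < l"
    then have "T = 0" "R = r" using T0 by (auto simp: l_def)
    then have "r \<noteq> 0" using Rp by simp
    then have "\<theta> = 0" using \<open>T = 0\<close> by (simp add: T_def)
    then have "v = u" using vq by simp
    then show False using xu yv \<open>R = r\<close> xy by simp
  qed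
  have Tl: "T \<le> l" by (simp add: l_def)
  obtain L where L: "rectifiable_path_on l (\<lambda>t. if t \<le> T then P1 t else P2 (t - T))"
      "has_M_length (rhoM f) l (\<lambda>t. if t \<le> T then P1 t else P2 (t - T)) (ereal L)"
      "L \<le> (H1 T - H1 0) + (H2 (l - T) - H2 0)"
    using combine[OF p1 p2 j lp Tl fc kap] by blast
  have g0: "(\<lambda>t. if t \<le> T then P1 t else P2 (t - T)) 0 = x"
    using T0 xu by (simp add: P1_def circ_0)
  have P2e: "P2 (l - T) = y" unfolding lT P2_def using yv by (simp add: \<sigma>_def)
  have gl: "(\<lambda>t. if t \<le> T then P1 t else P2 (t - T)) l = y"
  proof (cases "l \<le> T")
    case True
    then have "l = T" using Tl by simp
    then show ?thesis using j P2e by simp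
  next
    case False then show ?thesis using P2e by simp
  qed
  have "H2 (l - T) - H2 0 \<le> 2 * \<bar>R - r\<bar> / (f r * f R)"
    unfolding lT H2_def \<sigma>_def using SP(2) by simp
  moreover have "H1 T - H1 0 = r / (f r)^2 * \<theta>" by (simp add: H1_def T_def)
  moreover have "r / (f r)^2 * \<theta> + 2 * \<bar>R - r\<bar> / (f r * f R) \<le> sqrt (pi^2/4 + 4) * dist x y / (f r * f R)"
  proof (rule final_ineq[OF frr r0 th])
    show "0 \<le> r / (f r)^2" using r0 by simp
    show "r / (f r)^2 \<le> r / (f r)^2 \<or> r / (f r)^2 \<le> R / (f R)^2" by simp
    show "r / (f r)^2 \<le> r / (f r)^2" by simp
    show "r / (f r)^2 \<le> R / (f R)^2" using A by (simp add: r_def R_def)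
    show "0 \<le> dist x y" by simp
    show "(dist x y)^2 = r^2 + R^2 - 2 * r * R * cos \<theta>"
      using dist_sq[OF xu yv nu nv cth[symmetric] r0] by (simp add: r_def R_def)
  qed
  ultimately have "L \<le> sqrt (pi^2/4 + 4) * dist x y / (f (norm x) * f (norm y))"
    using L(3) by (simp add: r_def R_def)
  then show ?thesis using L(1,2) g0 gl by blast
qed

lemma caseB:
  fixes f :: "real \<Rightarrow> real" and x y :: "'a::euclidean_space"
  assumes dim: "DIM('a) \<ge> 2" and mono: "mono_on {0..} f" and anti: "antimono_on {0<..} (\<lambda>t. f t / t)"
    and fc: "continuous_on {0..} f" and xy: "x \<noteq> y" and fx: "0 < f (norm x)" and fy: "0 < f (norm y)"
    and B: "norm y / (f (norm y))^2 < norm x / (f (norm x))^2"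
  shows "\<exists>L l \<gamma>. rectifiable_path_on l \<gamma> \<and> \<gamma> 0 = x \<and> \<gamma> l = y \<and> has_M_length (rhoM f) l \<gamma> (ereal L) \<and>
           L \<le> sqrt (pi^2/4 + 4) * dist x y / (f (norm x) * f (norm y))"
proof -
  define r where "r = norm x"
  define R where "R = norm y"
  have r0: "0 \<le> r" "0 \<le> R" by (auto simp: r_def R_def)
  have x0: "x \<noteq> 0"
  proof
    assume "x = 0"
    then have "norm y / (f (norm y))^2 < 0" using B by simp
    moreover have "0 \<le> norm y / (f (norm y))^2" by simp
    ultimately show False by linarith
  qed
  have rp: "0 < r" using x0 by (simp add: r_def)
  define u where "u = x /\<^sub>R r"
  define v where "v = (if y = 0 then u else y /\<^sub>R R)"
  have nu: "norm u = 1" using rp by (simp add: u_def r_def)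
  have nv: "norm v = 1" using nu by (simp add: v_def R_def)
  have xu: "x = r *\<^sub>R u" using rp by (simp add: u_def)
  have yv: "y = R *\<^sub>R v" by (cases "y = 0") (auto simp: v_def R_def)
  obtain \<theta> q where th: "0 \<le> \<theta>" "\<theta> \<le> pi" and q: "norm q = 1" "inner u q = 0"
    and vq: "v = cos \<theta> *\<^sub>R u + sin \<theta> *\<^sub>R q" and cth: "cos \<theta> = inner u v"
    using arc_data[OF dim nu nv] by blast
  define \<sigma> :: real where "\<sigma> = (if r \<le> R then 1 else -1)"
  define \<kappa> where "\<kappa> = 1 / (24 * R^2)"
  have kap: "0 \<le> \<kappa>" by (simp add: \<kappa>_def)
  define T where "T = \<bar>R - r\<bar>"
  define l where "l = T + R * \<theta>"
  define P1 where "P1 = (\<lambda>s. (r + \<sigma> * s) *\<^sub>R u)"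
  define H1 where "H1 = (\<lambda>s. \<sigma> * Phi f (min r R) (max r R) (r + \<sigma> * s))"
  define P2 where "P2 = circ R u q"
  define H2 where "H2 = (\<lambda>s::real. s / (f R)^2)"
  have frr: "0 < f r" "0 < f R" using fx fy by (auto simp: r_def R_def)
  have lT: "l - T = R * \<theta>" by (simp add: l_def)
  have p2: "piece_ok f P2 (l - T) H2 \<kappa>"
    unfolding lT P2_def H2_def \<kappa>_def by (rule circ_ok[where f=f, OF nu q r0(2) th frr(2)])
  have mx: "0 < max r R" using rp by simp
  note SP = seg_piece[OF mono anti frr r0 mx nu kap]
  have p1: "piece_ok f P1 T H1 \<kappa>" unfolding T_def P1_def H1_def \<sigma>_def by (rule SP(1))
  have P1T: "P1 T = R *\<^sub>R u" by (simp add: P1_def T_def \<sigma>_def)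
  have j: "P1 T = P2 0" unfolding P1T P2_def circ_0 ..
  have T0: "0 \<le> T" by (simp add: T_def)
  have lp: "0 < l"
  proof (rule ccontr)
    assume "\<not> 0 < l"
    moreover have "0 \<le> R * \<theta>" using r0 th by simp
    moreover have "0 \<le> T" by (simp add: T_def)
    ultimately have "T = 0" "R * \<theta> = 0" unfolding l_def by linarith+
    then have "R = r" by (simp add: T_def)
    then have "\<theta> = 0" using \<open>R * \<theta> = 0\<close> rp by simp
    then have "v = u" using vq by simp
    then show False using xu yv \<open>R = r\<close> xy by simp
  qed
  have Tl: "T \<le> l" using r0 th by (simp add: l_def)
  obtain L where L: "rectifiable_path_on l (\<lambda>t. if t \<le> T then P1 t else P2 (t - T))"
      "has_M_length (rhoM f) l (\<lambda>t. if t \<le> T then P1 t else P2 (t - T)) (ereal L)"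
      "L \<le> (H1 T - H1 0) + (H2 (l - T) - H2 0)"
    using combine[OF p1 p2 j lp Tl fc kap] by blast
  have g0: "(\<lambda>t. if t \<le> T then P1 t else P2 (t - T)) 0 = x"
    using T0 xu by (simp add: P1_def)
  have gl: "(\<lambda>t. if t \<le> T then P1 t else P2 (t - T)) l = y"
  proof (cases "l \<le> T")
    case True
    then have "l = T" using Tl by simp
    then have "R * \<theta> = 0" by (simp add: l_def)
    have "R *\<^sub>R u = y"
    proof (cases "R = 0")
      case True then show ?thesis using yv by simp
    next
      case False
      then have "\<theta> = 0" using \<open>R * \<theta> = 0\<close> by simp
      then have "v = u" using vq by simp
      then show ?thesis using yv by simp
    qed
    then show ?thesis using \<open>l = T\<close> P1T by simp
  next
    case False
    have "P2 (l - T) = y" unfolding lT P2_def circ_end using vq yv by simp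
    then show ?thesis using False by simp
  qed
  have "H1 T - H1 0 \<le> 2 * \<bar>R - r\<bar> / (f r * f R)"
    unfolding T_def H1_def \<sigma>_def using SP(2) by simp
  moreover have "H2 (l - T) - H2 0 = R / (f R)^2 * \<theta>" by (simp add: H2_def lT)
  moreover have "R / (f R)^2 * \<theta> + 2 * \<bar>R - r\<bar> / (f r * f R) \<le> sqrt (pi^2/4 + 4) * dist x y / (f r * f R)"
  proof (rule final_ineq[OF frr r0 th])
    show "0 \<le> R / (f R)^2" using r0 by simp
    show "R / (f R)^2 \<le> r / (f r)^2 \<or> R / (f R)^2 \<le> R / (f R)^2" by simp
    show "R / (f R)^2 \<le> r / (f r)^2" using B by (simp add: r_def R_def)
    show "R / (f R)^2 \<le> R / (f R)^2" by simp
    show "0 \<le> dist x y" by simp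
    show "(dist x y)^2 = r^2 + R^2 - 2 * r * R * cos \<theta>"
      using dist_sq[OF xu yv nu nv cth[symmetric] r0] by (simp add: r_def R_def)
  qed
  ultimately have "L \<le> sqrt (pi^2/4 + 4) * dist x y / (f (norm x) * f (norm y))"
    using L(3) by (simp add: r_def R_def)
  then show ?thesis using L(1,2) g0 gl by blast
qed



lemma const_path:
  fixes x :: "'a::euclidean_space"
  shows "rectifiable_path_on 1 (\<lambda>_. x) \<and> has_M_length (rhoM f) 1 (\<lambda>_. x) 0"
proof
  show "rectifiable_path_on 1 (\<lambda>_. x)"
    by (rule rectifiable_lemma) auto
  have rx: "rhoM f x x = 0" by (simp add: rhoM_def)
  have z: "sum_list (map (\<lambda>(a::real, b::real). (0::ereal)) zs) = 0" for zs
    by (induction zs) auto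
  have "psum (rhoM f) (\<lambda>_. x) ts = 0" for ts
    unfolding psum_def rx using z by simp
  then have "psum (rhoM f) (\<lambda>_. x) = (\<lambda>_. 0)" by (rule ext)
  then show "has_M_length (rhoM f) 1 (\<lambda>_. x) 0"
    unfolding has_M_length_def by simp
qed

theorem theorem1p3:
  fixes f :: "real \<Rightarrow> real"
  assumes "DIM('a::euclidean_space) \<ge> 2"
    and "\<forall>t\<ge>0. f t \<ge> 0"
    and "moderately_increasing f"
    and "convex_on {0..} f"
  shows "\<exists>c. c \<le> sqrt (pi\<^sup>2 / 4 + 4) \<and> quasiconvex c (rhoM f :: 'a \<Rightarrow> 'a \<Rightarrow> ereal)"
proof -
  have mono: "mono_on {0..} f" and anti: "antimono_on {0<..} (\<lambda>t. f t / t)"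
    using assms(3) by (auto simp: moderately_increasing_def)
  have fc: "continuous_on {0..} f" by (rule f_cont[OF mono assms(4)])
  define c where "c = sqrt (pi\<^sup>2 / 4 + 4)"
  have c0: "0 < c" by (simp add: c_def add_pos_nonneg)
  have "quasiconvex c (rhoM f :: 'a \<Rightarrow> 'a \<Rightarrow> ereal)"
    unfolding quasiconvex_def
  proof (intro allI)
    fix x y :: 'a
    define S where "S = {L. \<exists>l \<gamma>. rectifiable_path_on l \<gamma> \<and> \<gamma> 0 = x \<and> \<gamma> l = y \<and> has_M_length (rhoM f) l \<gamma> L}"
    show "(INF L\<in>{L. \<exists>l \<gamma>. rectifiable_path_on l \<gamma> \<and> \<gamma> 0 = x \<and> \<gamma> l = y \<and> has_M_length (rhoM f) l \<gamma> L}. L)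
          \<le> ereal c * rhoM f x y"
    proof (cases "x = y")
      case True
      have "0 \<in> S" unfolding S_def using const_path[of x f] True by force
      then have "(INF L\<in>S. L) \<le> 0" by (rule INF_lower2) simp
      moreover have "rhoM f x y = 0" using True by (simp add: rhoM_def)
      ultimately show ?thesis by (simp add: S_def)
    next
      case False
      show ?thesis
      proof (cases "f (norm x) * f (norm y) = 0")
        case True
        then have "rhoM f x y = \<infinity>" using False by (simp add: rhoM_def)
        then have e: "ereal c * rhoM f x y = \<infinity>" using c0 by simp
        show ?thesis unfolding e by (rule ereal_less_eq(1))
      next
        case fne: False
        have fx: "0 < f (norm x)" using fne assms(2) by (metis less_eq_real_def mult_zero_left norm_ge_zero)
        have fy: "0 < f (norm y)" using fne assms(2) by (metis less_eq_real_def mult_zero_right norm_ge_zero)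
        have "\<exists>L l \<gamma>. rectifiable_path_on l \<gamma> \<and> \<gamma> 0 = x \<and> \<gamma> l = y \<and> has_M_length (rhoM f) l \<gamma> (ereal L) \<and>
           L \<le> sqrt (pi^2/4 + 4) * dist x y / (f (norm x) * f (norm y))"
        proof (cases "norm x / (f (norm x))^2 \<le> norm y / (f (norm y))^2")
          case True
          then show ?thesis by (rule caseA[OF assms(1) mono anti fc False fx fy])
        next
          case nle: False
          then show ?thesis by (intro caseB[OF assms(1) mono anti fc False fx fy]) simp
        qed
        then obtain L where LS: "ereal L \<in> S" and Lb: "L \<le> c * dist x y / (f (norm x) * f (norm y))"
          unfolding S_def c_def by (auto simp: power2_eq_square)
        have "(INF L\<in>S. L) \<le> ereal L" by (rule INF_lower2[OF LS]) simp
        also have "\<dots> \<le> ereal (c * (dist x y / (f (norm x) * f (norm y))))" using Lb by simp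
        also have "\<dots> = ereal c * rhoM f x y" using fne by (simp add: rhoM_def)
        finally show ?thesis by (simp add: S_def)
      qed
    qed
  qed
  then show ?thesis by (intro exI[of _ c]) (simp add: c_def)
qed

end
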